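(* For every positive integer $d$, there exists a binary matrix $M$ such that $R_{binary}(M)\ge 4d$ and $R_{\mathbb{R}}(M)=3d$.
   Context: $R_{\mathbb{R}}$ is the usual rank over the reals. For a binary $n\times m$ matrix $M$, the binary rank $R_{binary}(M)$ is the least $k$ such that $M=UV$ with $U\in\{0,1\}^{n\times k}$, $V\in\{0,1\}^{k\times m}$, product computed with ordinary arithmetic. *)

theory Defs
  imports "Jordan_Normal_Form.DL_Rank"
begin

definition binary_mat :: "real mat \<Rightarrow> bool" where
  "binary_mat M \<longleftrightarrow> (\<forall>i < dim_row M. \<forall>j < dim_col M. M $$ (i, j) \<in> {0, 1})"

definition real_rank :: "real mat \<Rightarrow> nat" where
  "real_rank M = vec_space.rank (dim_row M) M"

definition binary_rank :: "real mat \<Rightarrow> nat" where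
  "binary_rank M = (LEAST k. \<exists>U V. U \<in> carrier_mat (dim_row M) k \<and> V \<in> carrier_mat k (dim_col M)
      \<and> binary_mat U \<and> binary_mat V \<and> M = U * V)"

end

theory Submission imports Defs begin

lemma rank_sum_blocks:
  fixes h :: "nat \<Rightarrow> nat \<Rightarrow> nat \<Rightarrow> real"
  assumes "\<And>b. b < k \<Longrightarrow> vec_space.rank n (mat n m (\<lambda>(i,j). h b i j)) \<le> r"
  shows "vec_space.rank n (mat n m (\<lambda>(i,j). \<Sum>b<k. h b i j)) \<le> r * k"
  using assms
proof (induction k)
  case 0
  have "mat n m (\<lambda>(i,j). \<Sum>b<(0::nat). h b i j) = 0\<^sub>m n m" by (rule eq_matI) auto
  then show ?case by (simp only: vec_space.rank_0I)
next
  case (Suc k)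
  have eq: "mat n m (\<lambda>(i,j). \<Sum>b<Suc k. h b i j) = mat n m (\<lambda>(i,j). \<Sum>b<k. h b i j) + mat n m (\<lambda>(i,j). h k i j)"
    by (rule eq_matI) auto
  have "vec_space.rank n (mat n m (\<lambda>(i,j). \<Sum>b<Suc k. h b i j)) \<le>
     vec_space.rank n (mat n m (\<lambda>(i,j). \<Sum>b<k. h b i j)) + vec_space.rank n (mat n m (\<lambda>(i,j). h k i j))"
    unfolding eq by (rule vec_space.rank_subadditive) auto
  also have "\<dots> \<le> r * k + r" using Suc by (intro add_mono) auto
  finally show ?case by simp
qed

lemma rank_outer:
  fixes f g :: "nat \<Rightarrow> real"
  shows "vec_space.rank n (mat n m (\<lambda>(i,j). f i * g j)) \<le> 1"
  by (rule vec_space.rank_le_1_product_entries[of _ n m f g]) auto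

definition ent :: "nat \<Rightarrow> nat \<Rightarrow> bool" where
  "ent i j \<longleftrightarrow> i div 4 = j div 4 \<and> (j mod 4 = i mod 4 \<or> j mod 4 = Suc i mod 4)"

definition Mf :: "nat \<Rightarrow> real mat" where
  "Mf d = mat (4*d) (4*d) (\<lambda>(i,j). if ent i j then 1 else 0)"

lemma eq_by_divmod: "(i::nat) div 4 = j div 4 \<Longrightarrow> i mod 4 = j mod 4 \<Longrightarrow> i = j"
  by (metis div_mult_mod_eq)

lemma mod4_cases: "(x::nat) mod 4 \<in> {0,1,2,3}" by auto

lemma Suc_mod4: "Suc i mod 4 = Suc (i mod 4) mod 4" by (simp add: mod_Suc)

lemma ent_alt: "ent i j \<longleftrightarrow> i div 4 = j div 4 \<and> (j mod 4 = i mod 4 \<or> j mod 4 = Suc (i mod 4) mod 4)"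
  unfolding ent_def by (simp only: Suc_mod4[of i])

lemma small_rect:
  fixes a b c e :: nat
  assumes "a < 4" "b < 4" "c \<noteq> e"
    "c = a \<or> c = Suc a mod 4" "e = a \<or> e = Suc a mod 4"
    "c = b \<or> c = Suc b mod 4" "e = b \<or> e = Suc b mod 4"
  shows "a = b"
proof -
  have ha: "Suc a mod 4 = (if a = 3 then 0 else Suc a)" using assms(1) by (auto simp: mod_Suc)
  have hb: "Suc b mod 4 = (if b = 3 then 0 else Suc b)" using assms(2) by (auto simp: mod_Suc)
  show ?thesis using assms(1-7) unfolding ha hb by (auto split: if_splits)
qed

lemma no_rect:
  assumes "ent i1 j1" "ent i1 j2" "ent i2 j1" "ent i2 j2" "j1 \<noteq> j2"
  shows "i1 = i2"
proof -
  have d: "i1 div 4 = i2 div 4" "j1 div 4 = j2 div 4" using assms unfolding ent_def by auto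
  have "j1 mod 4 \<noteq> j2 mod 4" using d(2) assms(5) eq_by_divmod by blast
  moreover have "j1 mod 4 = i1 mod 4 \<or> j1 mod 4 = Suc (i1 mod 4) mod 4"
    "j2 mod 4 = i1 mod 4 \<or> j2 mod 4 = Suc (i1 mod 4) mod 4"
    "j1 mod 4 = i2 mod 4 \<or> j1 mod 4 = Suc (i2 mod 4) mod 4"
    "j2 mod 4 = i2 mod 4 \<or> j2 mod 4 = Suc (i2 mod 4) mod 4"
    using assms unfolding ent_alt by auto
  ultimately have "i1 mod 4 = i2 mod 4" by (intro small_rect[of _ _ "j1 mod 4" "j2 mod 4"]) auto
  then show ?thesis using d(1) eq_by_divmod by blast
qed

lemma row_set: "{j. j < n \<and> ent i j} \<subseteq> {i, 4*(i div 4) + Suc i mod 4}"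
proof
  fix j assume "j \<in> {j. j < n \<and> ent i j}"
  then have e: "i div 4 = j div 4" "j mod 4 = i mod 4 \<or> j mod 4 = Suc i mod 4" unfolding ent_def by auto
  have jj: "j = j div 4 * 4 + j mod 4" by (rule div_mult_mod_eq[symmetric])
  from e(2) show "j \<in> {i, 4*(i div 4) + Suc i mod 4}"
  proof
    assume "j mod 4 = i mod 4" then show ?thesis using e(1) eq_by_divmod[of j i] by auto
  next
    assume "j mod 4 = Suc i mod 4" then show ?thesis using e(1) jj by (simp add: mult.commute)
  qed
qed

lemma col_set: "{i. i < n \<and> ent i j} \<subseteq> {j, 4*(j div 4) + (j+3) mod 4}"
proof
  fix i assume "i \<in> {i. i < n \<and> ent i j}"
  then have e: "i div 4 = j div 4" "j mod 4 = i mod 4 \<or> j mod 4 = Suc (i mod 4) mod 4" unfolding ent_alt by auto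
  have "i mod 4 = j mod 4 \<or> i mod 4 = (j+3) mod 4"
  proof -
    have "(j + 3) mod 4 = (j mod 4 + 3) mod 4" by (simp add: mod_add_left_eq)
    moreover note mod4_cases[of i] mod4_cases[of j]
    ultimately show ?thesis using e(2) by auto
  qed
  moreover have ii: "i = i div 4 * 4 + i mod 4" by (rule div_mult_mod_eq[symmetric])
  ultimately show "i \<in> {j, 4*(j div 4) + (j+3) mod 4}"
    using e(1) eq_by_divmod[of i j] by (auto simp: mult.commute)
qed

definition A4 :: "nat \<Rightarrow> nat \<Rightarrow> real" where
  "A4 r c = (if c = r \<or> c = Suc r mod 4 then 1 else 0)"

definition w4 :: "nat \<Rightarrow> nat \<Rightarrow> real" where
  "w4 s c = (if s = 0 then (if c = 0 \<or> c = 3 then 1 else 0)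
     else if s = 1 then (if c = 1 then 1 else if c = 3 then -1 else 0)
     else (if c = 2 \<or> c = 3 then 1 else 0))"

lemma A4_decomp:
  assumes "r < 4" "c < 4"
  shows "A4 r c = (\<Sum>s<3. A4 r s * w4 s c)"
proof -
  have sum3: "(\<Sum>s<3. A4 r s * w4 s c) = A4 r 0 * w4 0 c + A4 r 1 * w4 1 c + A4 r 2 * w4 2 c"
    by (simp add: eval_nat_numeral)
  consider "r = 0" | "r = 1" | "r = 2" | "r = 3" using assms(1) by linarith
  moreover consider "c = 0" | "c = 1" | "c = 2" | "c = 3" using assms(2) by linarith
  ultimately show ?thesis unfolding sum3 by (cases; cases; simp add: A4_def w4_def)
qed

lemma Mf_index: "i < 4*d \<Longrightarrow> j < 4*d \<Longrightarrow> Mf d $$ (i,j) = (if ent i j then 1 else 0)"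
  "dim_row (Mf d) = 4*d" "dim_col (Mf d) = 4*d"
  unfolding Mf_def by auto

lemma two_elems:
  assumes "2 \<le> card A"
  obtains x y where "x \<in> A" "y \<in> A" "x \<noteq> y"
proof -
  have "A \<noteq> {}" using assms by auto
  then obtain x where x: "x \<in> A" by auto
  have "card (A - {x}) \<ge> 1" using assms x by (simp add: card_Diff_singleton_if)
  then have "A - {x} \<noteq> {}" by (metis card.empty not_one_le_zero)
  then obtain y where "y \<in> A - {x}" by auto
  then show ?thesis using that x by auto
qed

lemma rect_bound:
  assumes fR: "finite R" and fC: "finite C"
    and sub: "\<And>i j. i \<in> R \<Longrightarrow> j \<in> C \<Longrightarrow> ent i j"
    and Rn: "R \<subseteq> {..<n}" and Cn: "C \<subseteq> {..<n}"
  shows "card R * card C \<le> 2"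
proof (cases "card R \<ge> 2 \<and> card C \<ge> 2")
  case True
  then obtain i1 i2 where "i1 \<in> R" "i2 \<in> R" "i1 \<noteq> i2" using two_elems by metis
  moreover obtain j1 j2 where "j1 \<in> C" "j2 \<in> C" "j1 \<noteq> j2" using True two_elems by metis
  ultimately show ?thesis using no_rect sub by metis
next
  case False
  then have "card R \<le> 1 \<or> card C \<le> 1" by auto
  then show ?thesis
  proof
    assume a: "card R \<le> 1"
    show ?thesis
    proof (cases "card R = 0")
      case True then show ?thesis by simp
    next
      case False
      then have "card R = 1" using a by auto
      then obtain i where Ri: "R = {i}" using card_1_singletonE by blast
      have "C \<subseteq> {j. j < n \<and> ent i j}" using sub Cn Ri by auto
      also have "\<dots> \<subseteq> {i, 4*(i div 4) + Suc i mod 4}" by (rule row_set)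
      finally have "card C \<le> card {i, 4*(i div 4) + Suc i mod 4}" by (rule card_mono[rotated]) simp
      also have "\<dots> \<le> 2" by (simp add: card_insert_if) 
      finally show ?thesis using Ri by simp
    qed
  next
    assume a: "card C \<le> 1"
    show ?thesis
    proof (cases "card C = 0")
      case True then show ?thesis by simp
    next
      case False
      then have "card C = 1" using a by auto
      then obtain j where Cj: "C = {j}" using card_1_singletonE by blast
      have "R \<subseteq> {i. i < n \<and> ent i j}" using sub Rn Cj by auto
      also have "\<dots> \<subseteq> {j, 4*(j div 4) + (j+3) mod 4}" by (rule col_set)
      finally have "card R \<le> card {j, 4*(j div 4) + (j+3) mod 4}" by (rule card_mono[rotated]) simp
      also have "\<dots> \<le> 2" by (simp add: card_insert_if)
      finally show ?thesis using Cj by simp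
    qed
  qed
qed

lemma sum_indicator_card: "(\<Sum>i<(n::nat). if P i then 1 else (0::real)) = real (card {i. i < n \<and> P i})"
  using sum.inter_filter[OF finite_lessThan[of n], of "\<lambda>_. 1::real" P] by simp

lemma row_ge2:
  assumes "i < 4*d"
  shows "(\<Sum>j<4*d. Mf d $$ (i,j)) \<ge> 2"
proof -
  define b where "b = 4*(i div 4) + Suc i mod 4"
  have "i div 4 < d" using assms by auto
  then have bn: "b < 4*d" unfolding b_def by auto
  have bm: "b mod 4 = Suc i mod 4" "b div 4 = i div 4" unfolding b_def by auto
  have "Suc (i mod 4) mod 4 \<noteq> i mod 4" using mod4_cases[of i] by auto
  then have bi: "b \<noteq> i" using bm Suc_mod4 by metis
  have e: "ent i i" "ent i b" unfolding ent_def using bm by auto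
  have "(\<Sum>j\<in>{i,b}. Mf d $$ (i,j)) = 2" using bi e Mf_index(1)[OF assms] Mf_index(1)[OF assms bn] assms by simp
  moreover have "(\<Sum>j\<in>{i,b}. Mf d $$ (i,j)) \<le> (\<Sum>j<4*d. Mf d $$ (i,j))"
    by (rule sum_mono2) (use assms bn Mf_index(1)[OF assms] in auto)
  ultimately show ?thesis by simp
qed

lemma factor_bound:
  assumes U: "U \<in> carrier_mat (4*d) k" and V: "V \<in> carrier_mat k (4*d)"
    and bU: "binary_mat U" and bV: "binary_mat V" and eq: "Mf d = U * V"
  shows "4*d \<le> k"
proof -
  define n where "n = 4*d"
  have Ud: "dim_row U = n" "dim_col U = k" and Vd: "dim_row V = k" "dim_col V = n"
    using U V n_def by auto
  have U01: "\<And>i t. i < n \<Longrightarrow> t < k \<Longrightarrow> U $$ (i,t) \<in> {0,1}" using bU Ud unfolding binary_mat_def by auto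
  have V01: "\<And>t j. t < k \<Longrightarrow> j < n \<Longrightarrow> V $$ (t,j) \<in> {0,1}" using bV Vd unfolding binary_mat_def by auto
  have entry: "Mf d $$ (i,j) = (\<Sum>t<k. U $$ (i,t) * V $$ (t,j))" if "i < n" "j < n" for i j
  proof -
    have "Mf d $$ (i,j) = row U i \<bullet> col V j" using eq that Ud Vd by simp
    also have "\<dots> = (\<Sum>t<k. U $$ (i,t) * V $$ (t,j))"
      unfolding scalar_prod_def using that Ud Vd by (auto simp: lessThan_atLeast0 intro!: sum.cong)
    finally show ?thesis .
  qed
  define R where "R t = {i. i < n \<and> U $$ (i,t) = 1}" for t
  define C where "C t = {j. j < n \<and> V $$ (t,j) = 1}" for t
  have sub: "ent i j" if t: "t < k" and i: "i \<in> R t" and j: "j \<in> C t" for t i j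
  proof -
    have in_: "i < n" "j < n" using i j unfolding R_def C_def by auto
    have "1 = U $$ (i,t) * V $$ (t,j)" using i j unfolding R_def C_def by auto
    also have "\<dots> \<le> (\<Sum>t<k. U $$ (i,t) * V $$ (t,j))"
      by (rule member_le_sum) (use t U01 V01 in_ in force)+
    also have "\<dots> = Mf d $$ (i,j)" using entry in_ by simp
    finally show ?thesis using Mf_index(1)[of i d j] in_ n_def by (auto split: if_splits)
  qed
  have cb: "card (R t) * card (C t) \<le> 2" if "t < k" for t
    by (rule rect_bound[where n=n]) (auto simp: R_def C_def intro: sub[OF that])
  have sU: "(\<Sum>i<n. U $$ (i,t)) = real (card (R t))" if "t < k" for t
  proof -
    have "(\<Sum>i<n. U $$ (i,t)) = (\<Sum>i<n. if U $$ (i,t) = 1 then 1 else 0)"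
      by (rule sum.cong) (use U01 that in force)+
    then show ?thesis unfolding R_def sum_indicator_card .
  qed
  have sV: "(\<Sum>j<n. V $$ (t,j)) = real (card (C t))" if "t < k" for t
  proof -
    have "(\<Sum>j<n. V $$ (t,j)) = (\<Sum>j<n. if V $$ (t,j) = 1 then 1 else 0)"
      by (rule sum.cong) (use V01 that in force)+
    then show ?thesis unfolding C_def sum_indicator_card .
  qed
  have "(\<Sum>i<n. \<Sum>j<n. Mf d $$ (i,j)) = (\<Sum>i<n. \<Sum>j<n. \<Sum>t<k. U $$ (i,t) * V $$ (t,j))"
    using entry by simp
  also have "\<dots> = (\<Sum>i<n. \<Sum>t<k. \<Sum>j<n. U $$ (i,t) * V $$ (t,j))"
    by (rule sum.cong[OF refl], rule sum.swap)
  also have "\<dots> = (\<Sum>t<k. \<Sum>i<n. \<Sum>j<n. U $$ (i,t) * V $$ (t,j))"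
    by (rule sum.swap)
  also have "\<dots> = (\<Sum>t<k. (\<Sum>i<n. U $$ (i,t)) * (\<Sum>j<n. V $$ (t,j)))"
    by (simp add: sum_product)
  also have "\<dots> = (\<Sum>t<k. real (card (R t) * card (C t)))"
    using sU sV by simp
  also have "\<dots> \<le> (\<Sum>t<k. 2)"
  proof (rule sum_mono)
    fix t assume "t \<in> {..<k}"
    then have "card (R t) * card (C t) \<le> 2" using cb by simp
    then show "real (card (R t) * card (C t)) \<le> 2" by (metis of_nat_le_iff of_nat_numeral)
  qed
  finally have up: "(\<Sum>i<n. \<Sum>j<n. Mf d $$ (i,j)) \<le> 2 * real k" by simp
  have "(\<Sum>i<n. (2::real)) \<le> (\<Sum>i<n. \<Sum>j<n. Mf d $$ (i,j))"
    by (rule sum_mono) (use row_ge2 n_def in auto)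
  then have "2 * real n \<le> 2 * real k" using up by simp
  then show ?thesis unfolding n_def by simp
qed

lemma ent_A4: "ent i j \<longleftrightarrow> j div 4 = i div 4 \<and> A4 (i mod 4) (j mod 4) = 1"
  unfolding ent_alt A4_def by auto

definition hb :: "nat \<Rightarrow> nat \<Rightarrow> nat \<Rightarrow> real" where
  "hb b i j = (if i div 4 = b \<and> j div 4 = b then A4 (i mod 4) (j mod 4) else 0)"

lemma A4_01: "A4 r c = 0 \<or> A4 r c = 1" unfolding A4_def by auto

lemma Mf_as_sum: "Mf d = mat (4*d) (4*d) (\<lambda>(i,j). \<Sum>b<d. hb b i j)"
proof (rule eq_matI)
  fix i j assume ij: "i < dim_row (mat (4*d) (4*d) (\<lambda>(i,j). \<Sum>b<d. hb b i j))"
    "j < dim_col (mat (4*d) (4*d) (\<lambda>(i,j). \<Sum>b<d. hb b i j))"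
  then have ij': "i < 4*d" "j < 4*d" by auto
  then have id: "i div 4 < d" by auto
  have "(\<Sum>b<d. hb b i j) = (\<Sum>b<d. if b = i div 4 then (if j div 4 = i div 4 then A4 (i mod 4) (j mod 4) else 0) else 0)"
    by (rule sum.cong) (auto simp: hb_def)
  also have "\<dots> = (if j div 4 = i div 4 then A4 (i mod 4) (j mod 4) else 0)"
    using id by (simp add: sum.delta')
  also have "\<dots> = (if ent i j then 1 else 0)" unfolding ent_A4 using A4_01 by auto
  finally show "Mf d $$ (i,j) = mat (4*d) (4*d) (\<lambda>(i,j). \<Sum>b<d. hb b i j) $$ (i,j)"
    using ij' Mf_index by simp
qed (auto simp: Mf_index)

lemma hb_rank: "vec_space.rank n (mat n m (\<lambda>(i,j). hb b i j)) \<le> 3"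
proof -
  define f where "f s i = (if i div 4 = b then A4 (i mod 4) s else 0)" for s i
  define g where "g s j = (if j div 4 = b then w4 s (j mod 4) else 0)" for s j
  have "mat n m (\<lambda>(i,j). hb b i j) = mat n m (\<lambda>(i,j). \<Sum>s<3. f s i * g s j)"
  proof (rule eq_matI)
    fix i j
    show "mat n m (\<lambda>(i,j). hb b i j) $$ (i,j) = mat n m (\<lambda>(i,j). \<Sum>s<3. f s i * g s j) $$ (i,j)"
      if "i < dim_row (mat n m (\<lambda>(i,j). \<Sum>s<3. f s i * g s j))" "j < dim_col (mat n m (\<lambda>(i,j). \<Sum>s<3. f s i * g s j))"
    proof -
      have ij: "i < n" "j < m" using that by auto
      have "hb b i j = (\<Sum>s<3. f s i * g s j)"
      proof (cases "i div 4 = b \<and> j div 4 = b")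
        case True
        then have "(\<Sum>s<3. f s i * g s j) = (\<Sum>s<3. A4 (i mod 4) s * w4 s (j mod 4))"
          unfolding f_def g_def by simp
        also have "\<dots> = A4 (i mod 4) (j mod 4)" by (rule A4_decomp[symmetric]) auto
        finally show ?thesis using True unfolding hb_def by simp
      next
        case False
        then have "\<And>s. f s i * g s j = 0" unfolding f_def g_def by auto
        moreover have "hb b i j = 0" unfolding hb_def by (rule if_not_P[OF False])
        ultimately show ?thesis by simp
      qed
      then show ?thesis using ij by simp
    qed
  qed auto
  also have "vec_space.rank n \<dots> \<le> 1 * 3"
    by (rule rank_sum_blocks) (rule rank_outer)
  finally show ?thesis by simp
qed

lemma Mf_rank_le: "real_rank (Mf d) \<le> 3 * d"
proof -
  have "real_rank (Mf d) = vec_space.rank (4*d) (mat (4*d) (4*d) (\<lambda>(i,j). \<Sum>b<d. hb b i j))"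
    unfolding real_rank_def Mf_index(2) by (subst Mf_as_sum) simp
  also have "\<dots> \<le> 3 * d" by (rule rank_sum_blocks) (rule hb_rank)
  finally show ?thesis .
qed

lemma ent_cases:
  assumes "ent i j"
  shows "j = i \<or> (i mod 4 < 3 \<and> j = Suc i) \<or> (i mod 4 = 3 \<and> j = 4*(i div 4))"
proof -
  obtain q r s where qrs: "q = i div 4" "r = i mod 4" "s = j mod 4" by blast
  have e: "q = j div 4" "s = r \<or> s = Suc r mod 4"
    using assms qrs unfolding ent_alt by auto
  have ii: "i = 4*q + r" using div_mult_mod_eq[of i 4] qrs by linarith
  have jj: "j = 4*q + s" using div_mult_mod_eq[of j 4] qrs e(1) by linarith
  have "r < 4" using qrs by simp
  then consider "r = 0" | "r = 1" | "r = 2" | "r = 3" by linarith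
  then have "s = r \<or> (r < 3 \<and> s = Suc r) \<or> (r = 3 \<and> s = 0)" using e(2) by cases auto
  then consider "s = r" | "r < 3 \<and> s = Suc r" | "r = 3 \<and> s = 0" by blast
  then show ?thesis
  proof cases
    case 1 then have "j = i" using ii jj by linarith
    then show ?thesis by blast
  next
    case 2 then have "j = Suc i" using ii jj by linarith
    moreover have "i mod 4 < 3" using 2 qrs(2) by simp
    ultimately show ?thesis by blast
  next
    case 3 then have "j = 4*q" using jj by linarith
    then have "j = 4*(i div 4)" using qrs(1) by simp
    moreover have "i mod 4 = 3" using 3 qrs(2) by simp
    ultimately show ?thesis by blast
  qed
qed

definition Xm :: "nat \<Rightarrow> real mat" where
  "Xm d = mat (4*d) (4*d) (\<lambda>(i,j). if ent i j \<and> i \<le> j then 1 else 0)"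

definition Nm :: "nat \<Rightarrow> real mat" where
  "Nm d = mat (4*d) (4*d) (\<lambda>(i,j). \<Sum>b<d. (if i = 4*b+3 then -1 else 0) * (if j = 4*b then 1 else 0))"

lemma Nm_rank: "vec_space.rank (4*d) (Nm d) \<le> d"
proof -
  have "vec_space.rank (4*d) (Nm d) \<le> 1 * d"
    unfolding Nm_def by (rule rank_sum_blocks) (rule rank_outer)
  then show ?thesis by simp
qed

lemma Nm_dims: "dim_row (Nm d) = 4*d" "dim_col (Nm d) = 4*d" unfolding Nm_def by auto

lemma Xm_eq: "Xm d = Mf d + Nm d"
proof (rule eq_matI)
  fix i j assume "i < dim_row (Mf d + Nm d)" "j < dim_col (Mf d + Nm d)"
  then have ij: "i < 4*d" "j < 4*d" by (auto simp: Mf_index Nm_def)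
  then have id: "i div 4 < d" by auto
  have "(\<Sum>b<d. (if i = 4*b+3 then -1 else 0) * (if j = 4*b then 1 else (0::real)))
     = (\<Sum>b<d. if b = i div 4 then (if i mod 4 = 3 \<and> j = 4*(i div 4) then -1 else 0) else 0)"
  proof (rule sum.cong[OF refl])
    fix b
    have "i = 4*b+3 \<longleftrightarrow> b = i div 4 \<and> i mod 4 = 3"
    proof
      assume "i = 4*b+3" then show "b = i div 4 \<and> i mod 4 = 3" by simp
    next
      assume "b = i div 4 \<and> i mod 4 = 3"
      then show "i = 4*b+3" using div_mult_mod_eq[of i 4] by simp
    qed
    then show "(if i = 4*b+3 then -1 else 0) * (if j = 4*b then 1 else (0::real))
     = (if b = i div 4 then (if i mod 4 = 3 \<and> j = 4*(i div 4) then -1 else 0) else 0)" by auto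
  qed
  also have "\<dots> = (if i mod 4 = 3 \<and> j = 4*(i div 4) then -1 else 0)" using id by (simp add: sum.delta')
  finally have N: "Nm d $$ (i,j) = (if i mod 4 = 3 \<and> j = 4*(i div 4) then -1 else 0)"
    unfolding Nm_def using ij by simp
  have X: "Xm d $$ (i,j) = (if ent i j \<and> i \<le> j then 1 else 0)" unfolding Xm_def using ij by simp
  have S: "(Mf d + Nm d) $$ (i,j) = Mf d $$ (i,j) + Nm d $$ (i,j)" using ij Nm_dims by simp
  show "Xm d $$ (i,j) = (Mf d + Nm d) $$ (i,j)"
  proof (cases "i mod 4 = 3 \<and> j = 4*(i div 4)")
    case True
    then have "ent i j" unfolding ent_def by (auto simp: mod_Suc)
    moreover have "j < i" using True div_mult_mod_eq[of i 4] by linarith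
    ultimately show ?thesis using X N S ij Mf_index True by simp
  next
    case False
    have "ent i j \<Longrightarrow> i \<le> j" using ent_cases[of i j] False by auto
    then show ?thesis using X N S ij Mf_index False by auto
  qed
qed (auto simp: Xm_def Nm_def Mf_index)

lemma Xm_rank: "vec_space.rank (4*d) (Xm d) = 4*d"
proof -
  have car: "Xm d \<in> carrier_mat (4*d) (4*d)" unfolding Xm_def by simp
  have ut: "upper_triangular (Xm d)" unfolding Xm_def by (rule upper_triangularI) auto
  have "diag_mat (Xm d) = map (\<lambda>_. 1) [0..<4*d]"
    unfolding diag_mat_def Xm_def by (auto simp: ent_def)
  then have "det (Xm d) = 1" using det_upper_triangular[OF ut car] by (simp add: map_replicate_const)
  then show ?thesis using vec_space.det_rank_iff[OF car] by simp
qed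

lemma Mf_rank_ge: "3 * d \<le> real_rank (Mf d)"
proof -
  have "4*d = vec_space.rank (4*d) (Mf d + Nm d)" using Xm_rank Xm_eq by simp
  also have "\<dots> \<le> vec_space.rank (4*d) (Mf d) + vec_space.rank (4*d) (Nm d)"
    by (rule vec_space.rank_subadditive) (auto simp: Mf_def Nm_def)
  also have "\<dots> \<le> real_rank (Mf d) + d" using Nm_rank unfolding real_rank_def Mf_index by simp
  finally show ?thesis by simp
qed

lemma Mf_binary: "binary_mat (Mf d)"
  unfolding binary_mat_def by (auto simp: Mf_index)

lemma Mf_binary_rank: "4 * d \<le> binary_rank (Mf d)"
proof -
  define P where "P k \<longleftrightarrow> (\<exists>U V. U \<in> carrier_mat (dim_row (Mf d)) k \<and> V \<in> carrier_mat k (dim_col (Mf d))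
      \<and> binary_mat U \<and> binary_mat V \<and> Mf d = U * V)" for k
  have "P (4*d)"
    unfolding P_def
    by (rule exI[of _ "Mf d"], rule exI[of _ "1\<^sub>m (4*d)"])
       (auto simp: Mf_index Mf_binary binary_mat_def Mf_def)
  then have "P (LEAST k. P k)" by (rule LeastI)
  then have "4 * d \<le> (LEAST k. P k)" unfolding P_def Mf_index using factor_bound by blast
  then show ?thesis unfolding binary_rank_def P_def .
qed

theorem theorem3:
  fixes d :: nat
  assumes "d > 0"
  shows "\<exists>M :: real mat. binary_mat M \<and> binary_rank M \<ge> 4 * d \<and> real_rank M = 3 * d"
  using Mf_binary Mf_binary_rank Mf_rank_le Mf_rank_ge le_antisym by blast

end
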